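(* Let $F$ be a field, $A$ a finitely generated free abelian group, $F * A$ a twisted group algebra, and $A'<A$ a subgroup of finite index in $A$. Then $\dim(F * A')=\dim(F * A)$.
   Context: A twisted group algebra $F * A$ is an $F$-algebra with $F$-basis $\{\bar a: a\in A\}$ and $\bar a_1\bar a_2=\tau(a_1,a_2)\overline{a_1a_2}$, $\tau$ a 2-cocycle with values in $F\setminus\{0\}$; $F * A'$ is the subalgebra spanned by $\bar a$, $a\in A'$. $\dim$ denotes the Krull dimension, which for these algebras coincides with the global dimension. *)

theory Defs
  imports Main "HOL-Library.Extended_Nat"
begin

text \<open>The free abelian group Z^n, realised as integer vectors supported on {0..<n}.\<close>
type_synonym zvec = "nat \<Rightarrow> int"

definition Zn :: "nat \<Rightarrow> zvec set" where
  "Zn n = {v. \<forall>i\<ge>n. v i = 0}"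

definition vzero :: zvec where "vzero = (\<lambda>_. 0)"
definition vadd :: "zvec \<Rightarrow> zvec \<Rightarrow> zvec" where "vadd a b = (\<lambda>i. a i + b i)"
definition vneg :: "zvec \<Rightarrow> zvec" where "vneg a = (\<lambda>i. - a i)"

definition subgroup_of :: "zvec set \<Rightarrow> zvec set \<Rightarrow> bool" where
  "subgroup_of A H \<longleftrightarrow> H \<subseteq> A \<and> vzero \<in> H \<and>
     (\<forall>a\<in>H. \<forall>b\<in>H. vadd a b \<in> H) \<and> (\<forall>a\<in>H. vneg a \<in> H)"

definition finite_index :: "zvec set \<Rightarrow> zvec set \<Rightarrow> bool" where
  "finite_index A H \<longleftrightarrow> finite ((\<lambda>a. {vadd a h | h. h \<in> H}) ` A)"

definition two_cocycle :: "zvec set \<Rightarrow> (zvec \<Rightarrow> zvec \<Rightarrow> 'k::field) \<Rightarrow> bool" where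
  "two_cocycle A \<tau> \<longleftrightarrow> (\<forall>a\<in>A. \<forall>b\<in>A. \<tau> a b \<noteq> 0) \<and>
     (\<forall>a\<in>A. \<forall>b\<in>A. \<forall>c\<in>A. \<tau> a b * \<tau> (vadd a b) c = \<tau> a (vadd b c) * \<tau> b c)"

text \<open>Twisted group algebra F * S: finitely supported functions S \<rightarrow> F
  (x corresponds to the sum of x a times bar a), with twisted convolution.\<close>
definition supp :: "(zvec \<Rightarrow> 'k::field) \<Rightarrow> zvec set" where
  "supp x = {a. x a \<noteq> 0}"

definition TGA :: "zvec set \<Rightarrow> (zvec \<Rightarrow> 'k::field) set" where
  "TGA S = {x. finite (supp x) \<and> supp x \<subseteq> S}"

definition tzero :: "zvec \<Rightarrow> 'k::field" where "tzero = (\<lambda>_. 0)"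
definition tadd :: "(zvec \<Rightarrow> 'k::field) \<Rightarrow> (zvec \<Rightarrow> 'k) \<Rightarrow> zvec \<Rightarrow> 'k" where
  "tadd x y = (\<lambda>a. x a + y a)"
definition tneg :: "(zvec \<Rightarrow> 'k::field) \<Rightarrow> zvec \<Rightarrow> 'k" where
  "tneg x = (\<lambda>a. - x a)"

definition tmul :: "(zvec \<Rightarrow> zvec \<Rightarrow> 'k::field) \<Rightarrow> (zvec \<Rightarrow> 'k) \<Rightarrow> (zvec \<Rightarrow> 'k) \<Rightarrow> zvec \<Rightarrow> 'k" where
  "tmul \<tau> x y = (\<lambda>c. \<Sum>(a,b) \<in> {p \<in> supp x \<times> supp y. vadd (fst p) (snd p) = c}.
                        x a * y b * \<tau> a b)"

definition rideal :: "zvec set \<Rightarrow> (zvec \<Rightarrow> zvec \<Rightarrow> 'k::field) \<Rightarrow> (zvec \<Rightarrow> 'k) set \<Rightarrow> bool" where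
  "rideal S \<tau> I \<longleftrightarrow> I \<subseteq> TGA S \<and> tzero \<in> I \<and>
     (\<forall>x\<in>I. \<forall>y\<in>I. tadd x y \<in> I) \<and> (\<forall>x\<in>I. tneg x \<in> I) \<and>
     (\<forall>x\<in>I. \<forall>r\<in>TGA S. tmul \<tau> x r \<in> I)"

text \<open>Deviation (Gabriel-Rentschler) of intervals [b,a] in the lattice of right ideals:
  devlt S \<tau> k b a  means  dev [b,a] < k  (with dev = -\<infinity> for trivial intervals).
  dev[b,a] \<le> k iff for every descending chain of right ideals between a and b,
  all but finitely many factors have deviation < k.\<close>
primrec devlt :: "zvec set \<Rightarrow> (zvec \<Rightarrow> zvec \<Rightarrow> 'k::field) \<Rightarrow> nat \<Rightarrow>
                   (zvec \<Rightarrow> 'k) set \<Rightarrow> (zvec \<Rightarrow> 'k) set \<Rightarrow> bool" where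
  "devlt S \<tau> 0 b a = (b = a)"
| "devlt S \<tau> (Suc k) b a =
     (\<forall>c :: nat \<Rightarrow> (zvec \<Rightarrow> 'k) set.
        (\<forall>i. rideal S \<tau> (c i) \<and> b \<subseteq> c i \<and> c i \<subseteq> a \<and> c (Suc i) \<subseteq> c i) \<longrightarrow>
        (\<exists>N. \<forall>i\<ge>N. devlt S \<tau> k (c (Suc i)) (c i)))"

definition Kdim :: "zvec set \<Rightarrow> (zvec \<Rightarrow> zvec \<Rightarrow> 'k::field) \<Rightarrow> enat" where
  "Kdim S \<tau> = (if \<exists>k. devlt S \<tau> (Suc k) {tzero} (TGA S)
               then enat (LEAST k. devlt S \<tau> (Suc k) {tzero} (TGA S)) else \<infinity>)"

end

theory Submission imports Defs begin


primrec gdev :: "'x set set \<Rightarrow> nat \<Rightarrow> 'x set \<Rightarrow> 'x set \<Rightarrow> bool" where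
  "gdev P 0 b a = (b = a)"
| "gdev P (Suc k) b a =
     (\<forall>c :: nat \<Rightarrow> 'x set.
        (\<forall>i. c i \<in> P \<and> b \<subseteq> c i \<and> c i \<subseteq> a \<and> c (Suc i) \<subseteq> c i) \<longrightarrow>
        (\<exists>N. \<forall>i\<ge>N. gdev P k (c (Suc i)) (c i)))"

lemma devlt_gdev: "devlt S \<tau> k b a = gdev {I. rideal S \<tau> I} k b a"
  by (induction k arbitrary: b a) auto

lemma gdev_embed:
  assumes fQ: "\<forall>x\<in>P. f x \<in> Q"
    and mono: "\<forall>x\<in>P. \<forall>y\<in>P. x \<subseteq> y \<longrightarrow> f x \<subseteq> f y"
    and inj: "\<forall>x\<in>P. \<forall>y\<in>P. x \<subseteq> y \<longrightarrow> f x = f y \<longrightarrow> x = y"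
  shows "b \<in> P \<Longrightarrow> a \<in> P \<Longrightarrow> b \<subseteq> a \<Longrightarrow> gdev Q k (f b) (f a) \<Longrightarrow> gdev P k b a"
proof (induction k arbitrary: b a)
  case 0
  then show ?case using inj by auto
next
  case (Suc k)
  show ?case unfolding gdev.simps
  proof (intro allI impI)
    fix c :: "nat \<Rightarrow> _"
    assume ch: "\<forall>i. c i \<in> P \<and> b \<subseteq> c i \<and> c i \<subseteq> a \<and> c (Suc i) \<subseteq> c i"
    have "\<forall>i. (f \<circ> c) i \<in> Q \<and> f b \<subseteq> (f \<circ> c) i \<and> (f \<circ> c) i \<subseteq> f a \<and> (f \<circ> c) (Suc i) \<subseteq> (f \<circ> c) i"
      using ch Suc.prems fQ mono by auto
    moreover have "\<forall>c. (\<forall>i. c i \<in> Q \<and> f b \<subseteq> c i \<and> c i \<subseteq> f a \<and> c (Suc i) \<subseteq> c i) \<longrightarrow>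
        (\<exists>N. \<forall>i\<ge>N. gdev Q k (c (Suc i)) (c i))" using Suc.prems(4) by simp
    ultimately obtain N where N: "\<forall>i\<ge>N. gdev Q k ((f \<circ> c) (Suc i)) ((f \<circ> c) i)"
      by blast
    show "\<exists>N. \<forall>i\<ge>N. gdev P k (c (Suc i)) (c i)"
      using N ch Suc.IH by (metis comp_apply)
  qed
qed

definition sl :: "(nat \<times> 'x) set \<Rightarrow> nat \<Rightarrow> 'x set" where
  "sl X j = {y. (j, y) \<in> X}"

lemma gdev_prod:
  fixes m :: nat and P :: "'x set set"
  defines "Q \<equiv> {X. X \<subseteq> {..<m} \<times> UNIV \<and> (\<forall>j<m. sl X j \<in> P)}"
  shows "X \<subseteq> {..<m} \<times> UNIV \<Longrightarrow> Y \<subseteq> {..<m} \<times> UNIV \<Longrightarrow>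
     (\<forall>j<m. gdev P k (sl X j) (sl Y j)) \<Longrightarrow> gdev Q k X Y"
proof (induction k arbitrary: X Y)
  case 0
  then show ?case by (auto simp: sl_def set_eq_iff)
next
  case (Suc k)
  show ?case unfolding gdev.simps
  proof (intro allI impI)
    fix C :: "nat \<Rightarrow> _"
    assume ch: "\<forall>i. C i \<in> Q \<and> X \<subseteq> C i \<and> C i \<subseteq> Y \<and> C (Suc i) \<subseteq> C i"
    have "\<forall>j<m. \<exists>N. \<forall>i\<ge>N. gdev P k (sl (C (Suc i)) j) (sl (C i) j)"
    proof (intro allI impI)
      fix j assume j: "j < m"
      have "\<forall>i. sl (C i) j \<in> P \<and> sl X j \<subseteq> sl (C i) j \<and> sl (C i) j \<subseteq> sl Y j \<and> sl (C (Suc i)) j \<subseteq> sl (C i) j"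
        using ch j unfolding Q_def sl_def by blast
      moreover have "gdev P (Suc k) (sl X j) (sl Y j)" using Suc.prems(3) j by blast
      ultimately show "\<exists>N. \<forall>i\<ge>N. gdev P k (sl (C (Suc i)) j) (sl (C i) j)"
        unfolding gdev.simps by (rule spec[of _ "\<lambda>i. sl (C i) j", THEN mp, rotated])
    qed
    then obtain N where N: "\<forall>j<m. \<forall>i\<ge>N j. gdev P k (sl (C (Suc i)) j) (sl (C i) j)"
      by metis
    show "\<exists>N. \<forall>i\<ge>N. gdev Q k (C (Suc i)) (C i)"
    proof (intro exI allI impI)
      fix i assume i: "i \<ge> (\<Sum>j<m. N j)"
      have "\<forall>j<m. gdev P k (sl (C (Suc i)) j) (sl (C i) j)"
      proof (intro allI impI)
        fix j assume j: "j < m"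
        have "N j \<le> (\<Sum>j<m. N j)" using j by (intro member_le_sum) auto
        then show "gdev P k (sl (C (Suc i)) j) (sl (C i) j)" using N i j by auto
      qed
      moreover have "C (Suc i) \<subseteq> {..<m} \<times> UNIV" "C i \<subseteq> {..<m} \<times> UNIV"
        using ch unfolding Q_def by auto
      ultimately show "gdev Q k (C (Suc i)) (C i)" using Suc.IH by blast
    qed
  qed
qed




definition vsub :: "zvec \<Rightarrow> zvec \<Rightarrow> zvec" where "vsub c b = vadd c (vneg b)"
definition shift :: "(zvec \<Rightarrow> zvec \<Rightarrow> 'k::field) \<Rightarrow> zvec \<Rightarrow> (zvec \<Rightarrow> 'k) \<Rightarrow> zvec \<Rightarrow> 'k" where
  "shift \<tau> b x = (\<lambda>c. x (vsub c b) * \<tau> (vsub c b) b)"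
definition smul :: "'k::field \<Rightarrow> (zvec \<Rightarrow> 'k) \<Rightarrow> zvec \<Rightarrow> 'k" where
  "smul \<alpha> x = (\<lambda>c. \<alpha> * x c)"
definition bas :: "'k::field \<Rightarrow> zvec \<Rightarrow> zvec \<Rightarrow> 'k" where
  "bas \<alpha> b = (\<lambda>c. if c = b then \<alpha> else 0)"
definition grp :: "zvec set \<Rightarrow> bool" where
  "grp G \<longleftrightarrow> vzero \<in> G \<and> (\<forall>a\<in>G. \<forall>b\<in>G. vadd a b \<in> G) \<and> (\<forall>a\<in>G. vneg a \<in> G)"

lemmas vdefs = vsub_def vadd_def vneg_def vzero_def fun_eq_iff

lemma vadd_vsub[simp]: "vadd (vsub c b) b = c" by (simp add: vdefs)
lemma vsub_vadd[simp]: "vsub (vadd a b) b = a" by (simp add: vdefs)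
lemma vadd_vsub2[simp]: "vadd b (vsub c b) = c" by (simp add: vdefs)
lemma vsub_vadd2[simp]: "vsub (vadd b a) b = a" by (simp add: vdefs)
lemma vadd_comm: "vadd a b = vadd b a" by (simp add: vdefs)
lemma vadd_assoc: "vadd (vadd a b) c = vadd a (vadd b c)" by (simp add: vdefs)
lemma vadd_vzero[simp]: "vadd a vzero = a" "vadd vzero a = a" by (simp_all add: vdefs)
lemma vsub_vzero[simp]: "vsub a vzero = a" by (simp add: vdefs)
lemma vadd_eq_iff: "vadd a b = c \<longleftrightarrow> a = vsub c b" by (metis vadd_vsub vsub_vadd)
lemma vsub_vneg[simp]: "vsub a (vneg b) = vadd a b" by (simp add: vdefs)
lemma vadd_vneg[simp]: "vadd a (vneg a) = vzero" by (simp add: vdefs)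

lemma grpD: assumes "grp G"
  shows "vzero \<in> G" "a \<in> G \<Longrightarrow> b \<in> G \<Longrightarrow> vadd a b \<in> G" "a \<in> G \<Longrightarrow> vneg a \<in> G"
    "a \<in> G \<Longrightarrow> b \<in> G \<Longrightarrow> vsub a b \<in> G"
  using assms by (auto simp: grp_def vsub_def)

lemma grp_Zn: "grp (Zn n)" by (auto simp: grp_def Zn_def vdefs)
lemma grp_sub: "subgroup_of A H \<Longrightarrow> grp H" by (auto simp: grp_def subgroup_of_def)

lemma tmul_decomp:
  assumes fx: "finite (supp x)" and fy: "finite (supp y)"
  shows "tmul \<tau> x y = (\<lambda>c. \<Sum>b\<in>supp y. y b * shift \<tau> b x c)"
proof
  fix c
  have "tmul \<tau> x y c = (\<Sum>(a,b)\<in>supp x \<times> supp y. if vadd a b = c then x a * y b * \<tau> a b else 0)"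
  proof -
    have fin: "finite (supp x \<times> supp y)" using fx fy by simp
    have "tmul \<tau> x y c = (\<Sum>p\<in>{p \<in> supp x \<times> supp y. vadd (fst p) (snd p) = c}. (case p of (a,b) \<Rightarrow> x a * y b * \<tau> a b))"
      unfolding tmul_def by simp
    also have "\<dots> = (\<Sum>p\<in>supp x \<times> supp y. if vadd (fst p) (snd p) = c then (case p of (a,b) \<Rightarrow> x a * y b * \<tau> a b) else 0)"
      by (rule sum.inter_filter[OF fin])
    also have "\<dots> = (\<Sum>(a,b)\<in>supp x \<times> supp y. if vadd a b = c then x a * y b * \<tau> a b else 0)"
      by (rule sum.cong) (auto split: prod.split)
    finally show ?thesis .
  qed
  also have "\<dots> = (\<Sum>a\<in>supp x. \<Sum>b\<in>supp y. if vadd a b = c then x a * y b * \<tau> a b else 0)"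
    by (subst sum.cartesian_product) simp
  also have "\<dots> = (\<Sum>b\<in>supp y. \<Sum>a\<in>supp x. if vadd a b = c then x a * y b * \<tau> a b else 0)"
    by (rule sum.swap)
  also have "\<dots> = (\<Sum>b\<in>supp y. y b * shift \<tau> b x c)"
  proof (rule sum.cong)
    fix b
    have "(\<Sum>a\<in>supp x. if vadd a b = c then x a * y b * \<tau> a b else 0)
        = (\<Sum>a\<in>supp x. if a = vsub c b then x a * y b * \<tau> a b else 0)"
      by (simp add: vadd_eq_iff)
    also have "\<dots> = y b * shift \<tau> b x c"
      using fx by (simp add: sum.delta' shift_def supp_def)
    finally show "(\<Sum>a\<in>supp x. if vadd a b = c then x a * y b * \<tau> a b else 0) = y b * shift \<tau> b x c" .
  qed simp
  finally show "tmul \<tau> x y c = (\<Sum>b\<in>supp y. y b * shift \<tau> b x c)" .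
qed

lemma supp_bas: "supp (bas \<alpha> b) = (if \<alpha> = 0 then {} else {b})"
  by (auto simp: supp_def bas_def)

lemma tmul_bas:
  assumes "finite (supp x)"
  shows "tmul \<tau> x (bas \<alpha> b) = smul \<alpha> (shift \<tau> b x)"
proof -
  have "tmul \<tau> x (bas \<alpha> b) = (\<lambda>c. \<Sum>b'\<in>supp (bas \<alpha> b). bas \<alpha> b b' * shift \<tau> b' x c)"
    by (rule tmul_decomp[OF assms]) (simp add: supp_bas)
  then show ?thesis unfolding supp_bas by (cases "\<alpha> = 0") (simp_all add: smul_def bas_def)
qed

lemma sum_in:
  assumes "tzero \<in> I" "\<forall>x\<in>I. \<forall>y\<in>I. tadd x y \<in> I"
  shows "finite B \<Longrightarrow> (\<forall>b\<in>B. g b \<in> I) \<Longrightarrow> (\<lambda>c. \<Sum>b\<in>B. g b c) \<in> I"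
proof (induction B rule: finite_induct)
  case empty
  then show ?case using assms(1) by (simp add: tzero_def)
next
  case (insert b B)
  then have "tadd (g b) (\<lambda>c. \<Sum>b\<in>B. g b c) \<in> I" using assms(2) by auto
  then show ?case using insert by (simp add: tadd_def)
qed

context
  fixes G :: "zvec set" and \<tau> :: "zvec \<Rightarrow> zvec \<Rightarrow> 'k::field"
  assumes G: "grp G" and tc: "two_cocycle G \<tau>"
begin

lemma tnz: "a \<in> G \<Longrightarrow> b \<in> G \<Longrightarrow> \<tau> a b \<noteq> 0"
  using tc by (auto simp: two_cocycle_def)

lemma tcoc: "a \<in> G \<Longrightarrow> b \<in> G \<Longrightarrow> c \<in> G \<Longrightarrow> \<tau> a b * \<tau> (vadd a b) c = \<tau> a (vadd b c) * \<tau> b c"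
  using tc by (auto simp: two_cocycle_def)

lemma tau_r0: assumes "a \<in> G" shows "\<tau> a vzero = \<tau> vzero vzero"
proof -
  have "\<tau> a vzero * \<tau> a vzero = \<tau> a vzero * \<tau> vzero vzero"
    using tcoc[OF assms grpD(1)[OF G] grpD(1)[OF G]] by simp
  then show ?thesis using tnz[OF assms grpD(1)[OF G]] by simp
qed

lemma rideal_smul: assumes "rideal G \<tau> I" "x \<in> I" shows "smul \<alpha> x \<in> I"
proof -
  have xT: "x \<in> TGA G" using assms by (auto simp: rideal_def)
  have z: "vzero \<in> G" using G by (simp add: grpD)
  have b: "bas (\<alpha> / \<tau> vzero vzero) vzero \<in> TGA G" using z by (auto simp: TGA_def supp_bas)
  have "tmul \<tau> x (bas (\<alpha> / \<tau> vzero vzero) vzero) = smul \<alpha> x"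
  proof -
    have "smul (\<alpha> / \<tau> vzero vzero) (shift \<tau> vzero x) = smul \<alpha> x"
    proof
      fix c show "smul (\<alpha> / \<tau> vzero vzero) (shift \<tau> vzero x) c = smul \<alpha> x c"
      proof (cases "c \<in> G")
        case True
        then show ?thesis using tau_r0[OF True] tnz[OF z z] by (simp add: smul_def shift_def)
      next
        case False
        then have "x c = 0" using xT by (auto simp: TGA_def supp_def)
        then show ?thesis by (simp add: smul_def shift_def)
      qed
    qed
    then show ?thesis using xT by (simp add: tmul_bas TGA_def)
  qed
  moreover have "tmul \<tau> x (bas (\<alpha> / \<tau> vzero vzero) vzero) \<in> I" using assms b unfolding rideal_def by blast
  ultimately show ?thesis by simp
qed

lemma rideal_shift: assumes "rideal G \<tau> I" "x \<in> I" "b \<in> G" shows "shift \<tau> b x \<in> I"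
proof -
  have xT: "x \<in> TGA G" using assms by (auto simp: rideal_def)
  have bT: "bas 1 b \<in> TGA G" using assms by (auto simp: TGA_def supp_bas)
  have "tmul \<tau> x (bas 1 b) = shift \<tau> b x" using xT by (simp add: tmul_bas TGA_def smul_def)
  moreover have "tmul \<tau> x (bas 1 b) \<in> I" using assms bT unfolding rideal_def by blast
  ultimately show ?thesis by simp
qed

lemma rideal_intro:
  assumes "I \<subseteq> TGA G" "tzero \<in> I" "\<forall>x\<in>I. \<forall>y\<in>I. tadd x y \<in> I" "\<forall>x\<in>I. tneg x \<in> I"
    "\<forall>x\<in>I. \<forall>\<alpha>. smul \<alpha> x \<in> I" "\<forall>x\<in>I. \<forall>b\<in>G. shift \<tau> b x \<in> I"
  shows "rideal G \<tau> I"
  unfolding rideal_def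
proof (intro conjI ballI)
  fix x and r :: "zvec \<Rightarrow> 'k" assume x: "x \<in> I" and r: "r \<in> TGA G"
  have fx: "finite (supp x)" using x assms(1) by (auto simp: TGA_def)
  have "tmul \<tau> x r = (\<lambda>c. \<Sum>b\<in>supp r. smul (r b) (shift \<tau> b x) c)"
    using fx r by (simp add: tmul_decomp TGA_def smul_def)
  also have "\<dots> \<in> I"
    using assms x r by (intro sum_in) (auto simp: TGA_def)
  finally show "tmul \<tau> x r \<in> I" .
qed (use assms in auto)

end




lemma supp_tadd: "supp (tadd x y) \<subseteq> supp x \<union> supp y" by (auto simp: supp_def tadd_def)
lemma supp_tneg: "supp (tneg x) = supp x" by (auto simp: supp_def tneg_def)
lemma supp_smul: "supp (smul \<alpha> x) \<subseteq> supp x" by (auto simp: supp_def smul_def)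
lemma supp_shift: "supp (shift \<tau> b x) \<subseteq> (\<lambda>a. vadd a b) ` supp x"
proof
  fix c assume "c \<in> supp (shift \<tau> b x)"
  then have "vsub c b \<in> supp x" by (auto simp: supp_def shift_def)
  then show "c \<in> (\<lambda>a. vadd a b) ` supp x" by (intro image_eqI[of _ _ "vsub c b"]) auto
qed

lemma TGA_tzero: "tzero \<in> TGA G" by (simp add: TGA_def supp_def tzero_def)
lemma TGA_tadd: "x \<in> TGA G \<Longrightarrow> y \<in> TGA G \<Longrightarrow> tadd x y \<in> TGA G"
  using supp_tadd[of x y] by (auto simp: TGA_def intro: finite_subset)
lemma TGA_tneg: "x \<in> TGA G \<Longrightarrow> tneg x \<in> TGA G"
  by (simp add: TGA_def supp_tneg)
lemma TGA_smul: "x \<in> TGA G \<Longrightarrow> smul \<alpha> x \<in> TGA G"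
  using supp_smul[of \<alpha> x] by (auto simp: TGA_def intro: finite_subset)
lemma TGA_shift: assumes "grp G" "b \<in> G" "x \<in> TGA G" shows "shift \<tau> b x \<in> TGA G"
proof -
  have "(\<lambda>a. vadd a b) ` supp x \<subseteq> G" using assms by (auto simp: TGA_def grpD)
  then show ?thesis using supp_shift[of \<tau> b x] assms(3) by (auto simp: TGA_def intro: finite_subset)
qed

lemma shift_tzero[simp]: "shift \<tau> b tzero = tzero" by (simp add: shift_def tzero_def)
lemma smul_tzero[simp]: "smul \<alpha> tzero = tzero" by (simp add: smul_def tzero_def)

lemma rideal_TGA: assumes "grp G" "two_cocycle G \<tau>" shows "rideal G \<tau> (TGA G)"
  by (rule rideal_intro[OF assms]) (auto intro: TGA_tzero TGA_tadd TGA_tneg TGA_smul TGA_shift[OF assms(1)])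

lemma rideal_zero: assumes "grp G" "two_cocycle G \<tau>" shows "rideal G \<tau> {tzero}"
  by (rule rideal_intro[OF assms]) (auto simp: TGA_tzero[unfolded tzero_def] tadd_def tneg_def tzero_def smul_def shift_def)

context
  fixes n :: nat and \<tau> :: "zvec \<Rightarrow> zvec \<Rightarrow> 'k::field" and A' :: "zvec set"
  assumes tc: "two_cocycle (Zn n) \<tau>" and sg: "subgroup_of (Zn n) A'"
begin

lemma A'sub: "A' \<subseteq> Zn n" using sg by (simp add: subgroup_of_def)
lemma grpA': "grp A'" using sg by (rule grp_sub)
lemma tcA': "two_cocycle A' \<tau>" using tc A'sub unfolding two_cocycle_def by blast

lemma inA: "a \<in> A' \<Longrightarrow> a \<in> Zn n" using A'sub by auto

definition psi :: "zvec \<Rightarrow> (zvec \<Rightarrow> 'k) \<Rightarrow> zvec \<Rightarrow> 'k" where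
  "psi t x = (\<lambda>a. if a \<in> A' then x (vadd a t) / \<tau> a t else 0)"

definition fI :: "(zvec \<Rightarrow> 'k) set \<Rightarrow> (zvec \<Rightarrow> 'k) set" where
  "fI I = {x \<in> TGA (Zn n). \<forall>t\<in>Zn n. psi t x \<in> I}"

lemma psi_TGA: assumes "finite (supp x)" shows "psi t x \<in> TGA A'"
proof -
  have "supp (psi t x) \<subseteq> (\<lambda>c. vsub c t) ` supp x"
  proof
    fix a assume "a \<in> supp (psi t x)"
    then have "vadd a t \<in> supp x" by (auto simp: supp_def psi_def split: if_splits)
    then show "a \<in> (\<lambda>c. vsub c t) ` supp x" by (intro image_eqI[of _ _ "vadd a t"]) auto
  qed
  moreover have "supp (psi t x) \<subseteq> A'" by (auto simp: supp_def psi_def split: if_splits)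
  ultimately show ?thesis using assms by (auto simp: TGA_def intro: finite_subset)
qed

lemma psi_tzero[simp]: "psi t tzero = tzero" by (simp add: psi_def tzero_def fun_eq_iff)
lemma psi_tadd: "psi t (tadd x y) = tadd (psi t x) (psi t y)"
  by (simp add: psi_def tadd_def fun_eq_iff add_divide_distrib)
lemma psi_tneg: "psi t (tneg x) = tneg (psi t x)"
  by (simp add: psi_def tneg_def fun_eq_iff)
lemma psi_smul: "psi t (smul \<alpha> x) = smul \<alpha> (psi t x)"
  by (simp add: psi_def smul_def fun_eq_iff)

lemma psi_shift: assumes t: "t \<in> Zn n" and b: "b \<in> Zn n"
  shows "psi t (shift \<tau> b x) = smul (\<tau> (vsub t b) b) (psi (vsub t b) x)"
proof
  fix a
  show "psi t (shift \<tau> b x) a = smul (\<tau> (vsub t b) b) (psi (vsub t b) x) a"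
  proof (cases "a \<in> A'")
    case True
    then have a: "a \<in> Zn n" by (rule inA)
    have s: "vsub t b \<in> Zn n" using t b grp_Zn by (simp add: grpD)
    have d: "vsub (vadd a t) b = vadd a (vsub t b)" by (simp add: vdefs)
    have vb: "vadd (vsub t b) b = t" by simp
    have H: "\<tau> a (vsub t b) * \<tau> (vadd a (vsub t b)) b = \<tau> a t * \<tau> (vsub t b) b"
      using tcoc[OF grp_Zn tc a s b] vb by simp
    have n1: "\<tau> a t \<noteq> 0" using tnz[OF grp_Zn tc a t] .
    have n2: "\<tau> a (vsub t b) \<noteq> 0" using tnz[OF grp_Zn tc a s] .
    have "\<tau> (vadd a (vsub t b)) b / \<tau> a t = \<tau> (vsub t b) b / \<tau> a (vsub t b)"
      using H n1 n2 by (simp add: field_simps mult.commute)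
    then show ?thesis using True d
      by (simp add: psi_def smul_def shift_def) (metis (no_types, lifting) times_divide_eq_right mult.commute mult.left_commute)
  next
    case False
    then show ?thesis by (simp add: psi_def smul_def)
  qed
qed

lemma rideal_fI: assumes I: "rideal A' \<tau> I" shows "rideal (Zn n) \<tau> (fI I)"
proof (rule rideal_intro[OF grp_Zn tc])
  have I0: "tzero \<in> I" and Iadd: "\<forall>x\<in>I. \<forall>y\<in>I. tadd x y \<in> I" and Ineg: "\<forall>x\<in>I. tneg x \<in> I"
    using I by (auto simp: rideal_def)
  show "fI I \<subseteq> TGA (Zn n)" by (auto simp: fI_def)
  show "tzero \<in> fI I" using I0 by (simp add: fI_def TGA_tzero)
  show "\<forall>x\<in>fI I. \<forall>y\<in>fI I. tadd x y \<in> fI I"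
    using Iadd by (auto simp: fI_def psi_tadd TGA_tadd)
  show "\<forall>x\<in>fI I. tneg x \<in> fI I"
    using Ineg by (auto simp: fI_def psi_tneg TGA_tneg)
  show "\<forall>x\<in>fI I. \<forall>\<alpha>. smul \<alpha> x \<in> fI I"
    using rideal_smul[OF grpA' tcA' I] by (auto simp: fI_def psi_smul TGA_smul)
  show "\<forall>x\<in>fI I. \<forall>b\<in>Zn n. shift \<tau> b x \<in> fI I"
  proof (intro ballI)
    fix x b assume x: "x \<in> fI I" and b: "b \<in> Zn n"
    have "\<forall>t\<in>Zn n. psi t (shift \<tau> b x) \<in> I"
    proof
      fix t assume t: "t \<in> Zn n"
      have "vsub t b \<in> Zn n" using t b grp_Zn by (simp add: grpD)
      then have "psi (vsub t b) x \<in> I" using x by (auto simp: fI_def)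
      then show "psi t (shift \<tau> b x) \<in> I"
        using psi_shift[OF t b] rideal_smul[OF grpA' tcA' I] by simp
    qed
    then show "shift \<tau> b x \<in> fI I" using x b by (auto simp: fI_def TGA_shift[OF grp_Zn])
  qed
qed

lemma tau_inv: assumes a: "a \<in> Zn n" and t: "t \<in> Zn n"
  shows "\<tau> a t * \<tau> (vadd a t) (vneg t) = \<tau> vzero vzero * \<tau> t (vneg t)"
proof -
  have nt: "vneg t \<in> Zn n" using t grp_Zn by (simp add: grpD)
  have "\<tau> a t * \<tau> (vadd a t) (vneg t) = \<tau> a (vadd t (vneg t)) * \<tau> t (vneg t)"
    using tcoc[OF grp_Zn tc a t nt] .
  then show ?thesis using tau_r0[OF grp_Zn tc a] by simp
qed

lemma sub_fI: assumes I: "rideal A' \<tau> I" shows "I \<subseteq> fI I"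
proof
  fix s assume s: "s \<in> I"
  have sT: "s \<in> TGA A'" using s I by (auto simp: rideal_def)
  have sz: "\<And>c. c \<notin> A' \<Longrightarrow> s c = 0" using sT by (auto simp: TGA_def supp_def)
  have "\<forall>t\<in>Zn n. psi t s \<in> I"
  proof
    fix t assume t: "t \<in> Zn n"
    show "psi t s \<in> I"
    proof (cases "t \<in> A'")
      case True
      have "psi t s = smul (1 / (\<tau> vzero vzero * \<tau> t (vneg t))) (shift \<tau> (vneg t) s)"
      proof
        fix a show "psi t s a = smul (1 / (\<tau> vzero vzero * \<tau> t (vneg t))) (shift \<tau> (vneg t) s) a"
        proof (cases "a \<in> A'")
          case aA: True
          then have a: "a \<in> Zn n" by (rule inA)
          have nt: "vneg t \<in> Zn n" using t grp_Zn by (simp add: grpD)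
          have at: "vadd a t \<in> Zn n" using a t grp_Zn by (simp add: grpD)
          have n1: "\<tau> a t \<noteq> 0" using tnz[OF grp_Zn tc a t] .
          have n2: "\<tau> (vadd a t) (vneg t) \<noteq> 0" using tnz[OF grp_Zn tc at nt] .
          have n3: "\<tau> vzero vzero * \<tau> t (vneg t) \<noteq> 0" using n1 n2 tau_inv[OF a t] by (metis mult_eq_0_iff)
          show ?thesis using aA tau_inv[OF a t] n1 n2 n3
            by (simp add: psi_def smul_def shift_def field_simps)
        next
          case aA: False
          have "vadd a t \<notin> A'"
          proof
            assume "vadd a t \<in> A'"
            then have "vsub (vadd a t) t \<in> A'" using grpD(4)[OF grpA' _ True] by blast
            then show False using aA by simp
          qed
          then show ?thesis using aA sz by (simp add: psi_def smul_def shift_def)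
        qed
      qed
      then show ?thesis using rideal_smul[OF grpA' tcA' I] rideal_shift[OF grpA' tcA' I s] True grpA'
        by (simp add: grpD)
    next
      case False
      have "psi t s = tzero"
      proof
        fix a show "psi t s a = tzero a"
        proof (cases "a \<in> A'")
          case aA: True
          have "vadd a t \<notin> A'"
          proof
            assume "vadd a t \<in> A'"
            then have "vsub (vadd a t) a \<in> A'" using grpD(4)[OF grpA' _ aA] by blast
            moreover have "vsub (vadd a t) a = t" by (simp add: vdefs)
            ultimately show False using False by simp
          qed
          then show ?thesis using sz by (simp add: psi_def tzero_def)
        qed (simp add: psi_def tzero_def)
      qed
      then show ?thesis using I by (simp add: rideal_def)
    qed
  qed
  moreover have "s \<in> TGA (Zn n)" using sT A'sub by (auto simp: TGA_def)
  ultimately show "s \<in> fI I" by (simp add: fI_def)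
qed

lemma fI_inj: assumes I: "rideal A' \<tau> I" and J: "rideal A' \<tau> J" and sub: "I \<subseteq> J" and eq: "fI I = fI J"
  shows "I = J"
proof
  show "J \<subseteq> I"
  proof
    fix s assume s: "s \<in> J"
    have sT: "s \<in> TGA A'" using s J by (auto simp: rideal_def)
    have "s \<in> fI I" using sub_fI[OF J] s eq by auto
    then have "psi vzero s \<in> I" using grp_Zn by (auto simp: fI_def grpD)
    then have "smul (\<tau> vzero vzero) (psi vzero s) \<in> I" using rideal_smul[OF grpA' tcA' I] by simp
    moreover have "smul (\<tau> vzero vzero) (psi vzero s) = s"
    proof
      fix a show "smul (\<tau> vzero vzero) (psi vzero s) a = s a"
      proof (cases "a \<in> A'")
        case True
        then have a: "a \<in> Zn n" by (rule inA)
        have "\<tau> vzero vzero \<noteq> 0" using tnz[OF grp_Zn tc] grp_Zn by (simp add: grpD)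
        then show ?thesis using True tau_r0[OF grp_Zn tc a] by (simp add: smul_def psi_def)
      next
        case False
        then show ?thesis using sT by (auto simp: smul_def psi_def TGA_def supp_def)
      qed
    qed
    ultimately show "s \<in> I" by simp
  qed
qed (rule sub)

lemma fI_zero: "fI {tzero} = {tzero}"
proof
  show "{tzero} \<subseteq> fI {tzero}" by (auto simp: fI_def TGA_tzero)
  show "fI {tzero} \<subseteq> {tzero}"
  proof
    fix x assume x: "x \<in> fI {tzero}"
    have "x = tzero"
    proof
      fix c show "x c = tzero c"
      proof (cases "c \<in> Zn n")
        case True
        then have "psi c x = tzero" using x by (auto simp: fI_def)
        then have "psi c x vzero = 0" by (simp add: tzero_def)
        moreover have "vzero \<in> A'" using grpA' by (simp add: grpD)
        moreover have "\<tau> vzero c \<noteq> 0" using tnz[OF grp_Zn tc _ True] grp_Zn by (simp add: grpD)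
        ultimately show ?thesis by (simp add: psi_def tzero_def)
      next
        case False
        then show ?thesis using x by (auto simp: fI_def TGA_def supp_def tzero_def)
      qed
    qed
    then show "x \<in> {tzero}" by simp
  qed
qed

lemma fI_TGA: "fI (TGA A') = TGA (Zn n)"
proof (intro equalityI subsetI)
  fix x :: "zvec \<Rightarrow> 'k" assume x: "x \<in> TGA (Zn n)"
  then have "finite (supp x)" by (simp add: TGA_def)
  then show "x \<in> fI (TGA A')" using x psi_TGA by (simp add: fI_def)
qed (simp add: fI_def)

lemma dirA: "devlt (Zn n) \<tau> k {tzero} (TGA (Zn n)) \<Longrightarrow> devlt A' \<tau> k {tzero} (TGA A')"
  unfolding devlt_gdev
proof -
  assume h: "gdev {I. rideal (Zn n) \<tau> I} k {tzero} (TGA (Zn n))"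
  show "gdev {I. rideal A' \<tau> I} k {tzero} (TGA A')"
  proof (rule gdev_embed[where f = fI])
    show "\<forall>x\<in>{I. rideal A' \<tau> I}. fI x \<in> {I. rideal (Zn n) \<tau> I}" using rideal_fI by auto
    show "\<forall>x\<in>{I. rideal A' \<tau> I}. \<forall>y\<in>{I. rideal A' \<tau> I}. x \<subseteq> y \<longrightarrow> fI x \<subseteq> fI y"
      by (auto simp: fI_def)
    show "\<forall>x\<in>{I. rideal A' \<tau> I}. \<forall>y\<in>{I. rideal A' \<tau> I}. x \<subseteq> y \<longrightarrow> fI x = fI y \<longrightarrow> x = y"
      using fI_inj by auto
    show "{tzero} \<in> {I. rideal A' \<tau> I}" using rideal_zero[OF grpA' tcA'] by simp
    show "TGA A' \<in> {I. rideal A' \<tau> I}" using rideal_TGA[OF grpA' tcA'] by simp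
    show "{tzero} \<subseteq> TGA A'" using TGA_tzero by auto
    show "gdev {I. rideal (Zn n) \<tau> I} k (fI {tzero}) (fI (TGA A'))" using h by (simp add: fI_zero fI_TGA)
  qed
qed

end




context
  fixes n :: nat and \<tau> :: "zvec \<Rightarrow> zvec \<Rightarrow> 'k::field" and A' :: "zvec set"
  assumes tc: "two_cocycle (Zn n) \<tau>" and sg: "subgroup_of (Zn n) A'"
    and fi: "finite_index (Zn n) A'"
begin

lemma A'sub': "A' \<subseteq> Zn n" using sg by (simp add: subgroup_of_def)
lemma grpA'': "grp A'" using sg by (rule grp_sub)
lemma tcA'': "two_cocycle A' \<tau>" using tc A'sub' unfolding two_cocycle_def by blast
lemma inA': "a \<in> A' \<Longrightarrow> a \<in> Zn n" using A'sub' by auto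

definition co :: "zvec \<Rightarrow> zvec set" where "co a = {vadd a h | h. h \<in> A'}"
definition CS where "CS = co ` Zn n"
lemma finCS: "finite CS" using fi by (simp add: CS_def co_def finite_index_def)

definition mm where "mm = card CS"
definition ee where "ee = (SOME e. bij_betw e {0..<mm} CS)"
lemma ee_bij: "bij_betw ee {0..<mm} CS"
  unfolding ee_def mm_def using ex_bij_betw_nat_finite[OF finCS] by (rule someI_ex)

definition rep where "rep j = (SOME a. a \<in> Zn n \<and> co a = ee j)"

lemma rep: assumes "j < mm" shows "rep j \<in> Zn n \<and> co (rep j) = ee j"
proof -
  have "ee j \<in> CS" using ee_bij assms by (auto simp: bij_betw_def)
  then have "\<exists>a. a \<in> Zn n \<and> co a = ee j" by (auto simp: CS_def)
  then show ?thesis unfolding rep_def by (rule someI_ex)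
qed

lemma co_eq: assumes "vsub c r \<in> A'" shows "co r = co c"
proof -
  have A: "\<And>h. h \<in> A' \<Longrightarrow> vsub h (vsub c r) \<in> A'" "\<And>h. h \<in> A' \<Longrightarrow> vadd (vsub c r) h \<in> A'"
    using assms grpA'' by (auto simp: grpD)
  have e1: "\<And>h. vadd r h = vadd c (vsub h (vsub c r))" by (simp add: vdefs)
  have e2: "\<And>h. vadd c h = vadd r (vadd (vsub c r) h)" by (simp add: vdefs)
  show ?thesis unfolding co_def using A e1 e2 by blast
qed

lemma R1: assumes c: "c \<in> Zn n" shows "\<exists>j<mm. vsub c (rep j) \<in> A'"
proof -
  have "co c \<in> CS" using c by (simp add: CS_def)
  then obtain j where j: "j < mm" "ee j = co c" using ee_bij
    by (auto simp: bij_betw_def) (metis atLeastLessThan_iff imageE)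
  have "c \<in> co c" unfolding co_def using grpA'' by (auto simp: grpD intro!: exI[of _ vzero])
  then have "c \<in> co (rep j)" using rep[OF j(1)] j(2) by simp
  then obtain h where "h \<in> A'" "c = vadd (rep j) h" by (auto simp: co_def)
  then show ?thesis using j by auto
qed

lemma R2: assumes "i < mm" "j < mm" "vsub c (rep i) \<in> A'" "vsub c (rep j) \<in> A'" shows "i = j"
proof -
  have "ee i = ee j" using co_eq[OF assms(3)] co_eq[OF assms(4)] rep[OF assms(1)] rep[OF assms(2)] by simp
  then show ?thesis using ee_bij assms(1,2) by (auto simp: bij_betw_def inj_on_def)
qed

definition comp :: "nat \<Rightarrow> (zvec \<Rightarrow> 'k) \<Rightarrow> zvec \<Rightarrow> 'k" where
  "comp j x = (\<lambda>a. if a \<in> A' then x (vadd (rep j) a) / \<tau> (rep j) a else 0)"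

definition Mset :: "nat \<Rightarrow> (zvec \<Rightarrow> 'k) set" where
  "Mset j = {x \<in> TGA (Zn n). \<forall>c\<in>supp x. \<exists>i. j \<le> i \<and> i < mm \<and> vsub c (rep i) \<in> A'}"

definition slice :: "(zvec \<Rightarrow> 'k) set \<Rightarrow> nat \<Rightarrow> (zvec \<Rightarrow> 'k) set" where
  "slice J j = comp j ` (J \<inter> Mset j)"

definition GG :: "(zvec \<Rightarrow> 'k) set \<Rightarrow> (nat \<times> (zvec \<Rightarrow> 'k)) set" where
  "GG J = {(j, y). j < mm \<and> y \<in> slice J j}"

lemma comp_TGA: assumes "finite (supp x)" shows "comp j x \<in> TGA A'"
proof -
  have "supp (comp j x) \<subseteq> (\<lambda>c. vsub c (rep j)) ` supp x"
  proof
    fix a assume "a \<in> supp (comp j x)"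
    then have "vadd (rep j) a \<in> supp x" by (auto simp: supp_def comp_def split: if_splits)
    then show "a \<in> (\<lambda>c. vsub c (rep j)) ` supp x" by (intro image_eqI[of _ _ "vadd (rep j) a"]) auto
  qed
  moreover have "supp (comp j x) \<subseteq> A'" by (auto simp: supp_def comp_def split: if_splits)
  ultimately show ?thesis using assms by (auto simp: TGA_def intro: finite_subset)
qed

lemma comp_tzero[simp]: "comp j tzero = tzero" by (simp add: comp_def tzero_def fun_eq_iff)
lemma comp_tadd: "comp j (tadd x y) = tadd (comp j x) (comp j y)"
  by (simp add: comp_def tadd_def fun_eq_iff add_divide_distrib)
lemma comp_tneg: "comp j (tneg x) = tneg (comp j x)"
  by (simp add: comp_def tneg_def fun_eq_iff)
lemma comp_smul: "comp j (smul \<alpha> x) = smul \<alpha> (comp j x)"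
  by (simp add: comp_def smul_def fun_eq_iff)

lemma comp_shift: assumes j: "j < mm" and b: "b \<in> A'"
  shows "comp j (shift \<tau> b x) = shift \<tau> b (comp j x)"
proof
  fix a
  have r: "rep j \<in> Zn n" using rep[OF j] by simp
  have bZ: "b \<in> Zn n" using b by (rule inA')
  show "comp j (shift \<tau> b x) a = shift \<tau> b (comp j x) a"
  proof (cases "a \<in> A'")
    case True
    have ab: "vsub a b \<in> A'" using True b grpA'' by (simp add: grpD)
    have abZ: "vsub a b \<in> Zn n" using ab by (rule inA')
    have aZ: "a \<in> Zn n" using True by (rule inA')
    have d: "vsub (vadd (rep j) a) b = vadd (rep j) (vsub a b)" by (simp add: vdefs)
    have H: "\<tau> (rep j) (vsub a b) * \<tau> (vadd (rep j) (vsub a b)) b = \<tau> (rep j) a * \<tau> (vsub a b) b"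
      using tcoc[OF grp_Zn tc r abZ bZ] by simp
    have n1: "\<tau> (rep j) a \<noteq> 0" using tnz[OF grp_Zn tc r aZ] .
    have n2: "\<tau> (rep j) (vsub a b) \<noteq> 0" using tnz[OF grp_Zn tc r abZ] .
    have "\<tau> (vadd (rep j) (vsub a b)) b / \<tau> (rep j) a = \<tau> (vsub a b) b / \<tau> (rep j) (vsub a b)"
      using H n1 n2 by (simp add: field_simps mult.commute)
    then show ?thesis using True ab d
      by (simp add: comp_def shift_def) (metis (no_types, lifting) times_divide_eq_right mult.commute mult.left_commute)
  next
    case False
    have "vsub a b \<notin> A'"
    proof
      assume "vsub a b \<in> A'"
      then have "vadd (vsub a b) b \<in> A'" using grpD(2)[OF grpA'' _ b] by blast
      then show False using False by simp
    qed
    then show ?thesis using False by (simp add: comp_def shift_def)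
  qed
qed

lemma Mset_tzero: "tzero \<in> Mset j" by (simp add: Mset_def TGA_def supp_def tzero_def)
lemma Mset_tadd: "x \<in> Mset j \<Longrightarrow> y \<in> Mset j \<Longrightarrow> tadd x y \<in> Mset j"
  using supp_tadd[of x y] by (auto simp: Mset_def TGA_tadd)
lemma Mset_tneg: "x \<in> Mset j \<Longrightarrow> tneg x \<in> Mset j"
  by (auto simp: Mset_def TGA_tneg supp_tneg)
lemma Mset_smul: "x \<in> Mset j \<Longrightarrow> smul \<alpha> x \<in> Mset j"
  using supp_smul[of \<alpha> x] by (auto simp: Mset_def TGA_smul)
lemma Mset_shift: assumes x: "x \<in> Mset j" and b: "b \<in> A'" shows "shift \<tau> b x \<in> Mset j"
proof -
  have bZ: "b \<in> Zn n" using b by (rule inA')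
  have "shift \<tau> b x \<in> TGA (Zn n)" using x TGA_shift[OF grp_Zn bZ] by (auto simp: Mset_def)
  moreover have "\<forall>c\<in>supp (shift \<tau> b x). \<exists>i. j \<le> i \<and> i < mm \<and> vsub c (rep i) \<in> A'"
  proof
    fix c assume "c \<in> supp (shift \<tau> b x)"
    then have "vsub c b \<in> supp x" by (auto simp: supp_def shift_def)
    then obtain i where i: "j \<le> i" "i < mm" "vsub (vsub c b) (rep i) \<in> A'" using x by (auto simp: Mset_def)
    then have "vadd (vsub (vsub c b) (rep i)) b \<in> A'" using b grpA'' by (simp add: grpD)
    moreover have "vadd (vsub (vsub c b) (rep i)) b = vsub c (rep i)" by (simp add: vdefs)
    ultimately show "\<exists>i. j \<le> i \<and> i < mm \<and> vsub c (rep i) \<in> A'" using i by auto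
  qed
  ultimately show ?thesis by (simp add: Mset_def)
qed

lemma rideal_slice: assumes J: "rideal (Zn n) \<tau> J" and j: "j < mm" shows "rideal A' \<tau> (slice J j)"
proof (rule rideal_intro[OF grpA'' tcA''])
  have J0: "tzero \<in> J" and Jadd: "\<forall>x\<in>J. \<forall>y\<in>J. tadd x y \<in> J" and Jneg: "\<forall>x\<in>J. tneg x \<in> J"
    and JT: "J \<subseteq> TGA (Zn n)"
    using J by (auto simp: rideal_def)
  show "slice J j \<subseteq> TGA A'"
  proof
    fix u assume "u \<in> slice J j"
    then obtain x where x: "x \<in> J" "u = comp j x" by (auto simp: slice_def)
    have "finite (supp x)" using JT x by (auto simp: TGA_def)
    then show "u \<in> TGA A'" using comp_TGA x by simp
  qed
  show "tzero \<in> slice J j" unfolding slice_def using J0 Mset_tzero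
    by (intro image_eqI[of _ _ tzero]) auto
  show "\<forall>x\<in>slice J j. \<forall>y\<in>slice J j. tadd x y \<in> slice J j"
  proof (intro ballI)
    fix u v assume "u \<in> slice J j" "v \<in> slice J j"
    then obtain x y where xy: "x \<in> J" "x \<in> Mset j" "u = comp j x" "y \<in> J" "y \<in> Mset j" "v = comp j y"
      by (auto simp: slice_def)
    show "tadd u v \<in> slice J j" unfolding slice_def
      by (rule image_eqI[of _ _ "tadd x y"]) (use xy Jadd Mset_tadd comp_tadd in auto)
  qed
  show "\<forall>u\<in>slice J j. tneg u \<in> slice J j"
  proof
    fix u assume "u \<in> slice J j"
    then obtain x where x: "x \<in> J" "x \<in> Mset j" "u = comp j x" by (auto simp: slice_def)
    show "tneg u \<in> slice J j" unfolding slice_def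
      by (rule image_eqI[of _ _ "tneg x"]) (use x Jneg Mset_tneg comp_tneg in auto)
  qed
  show "\<forall>u\<in>slice J j. \<forall>\<alpha>. smul \<alpha> u \<in> slice J j"
  proof (intro ballI allI)
    fix u \<alpha> assume "u \<in> slice J j"
    then obtain x where x: "x \<in> J" "x \<in> Mset j" "u = comp j x" by (auto simp: slice_def)
    show "smul \<alpha> u \<in> slice J j" unfolding slice_def
      by (rule image_eqI[of _ _ "smul \<alpha> x"]) (use x rideal_smul[OF grp_Zn tc J] Mset_smul comp_smul in auto)
  qed
  show "\<forall>u\<in>slice J j. \<forall>b\<in>A'. shift \<tau> b u \<in> slice J j"
  proof (intro ballI)
    fix u b assume "u \<in> slice J j" and b: "b \<in> A'"
    then obtain x where x: "x \<in> J" "x \<in> Mset j" "u = comp j x" by (auto simp: slice_def)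
    show "shift \<tau> b u \<in> slice J j" unfolding slice_def
      by (rule image_eqI[of _ _ "shift \<tau> b x"]) (use x b rideal_shift[OF grp_Zn tc J] Mset_shift comp_shift[OF j] inA' in auto)
  qed
qed

lemma sl_GG: "j < mm \<Longrightarrow> sl (GG J) j = slice J j" by (simp add: sl_def GG_def)

lemma Mset_Suc: assumes z: "z \<in> Mset j" and cz: "comp j z = tzero" and j: "j < mm"
  shows "z \<in> Mset (Suc j)"
proof -
  have "\<forall>c\<in>supp z. \<exists>i. Suc j \<le> i \<and> i < mm \<and> vsub c (rep i) \<in> A'"
  proof
    fix c assume c: "c \<in> supp z"
    then obtain i where i: "j \<le> i" "i < mm" "vsub c (rep i) \<in> A'" using z by (auto simp: Mset_def)
    have "i \<noteq> j"
    proof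
      assume ij: "i = j"
      let ?a = "vsub c (rep j)"
      have aA: "?a \<in> A'" using i ij by simp
      have "comp j z ?a = z c / \<tau> (rep j) ?a" using aA by (simp add: comp_def)
      moreover have "\<tau> (rep j) ?a \<noteq> 0" using tnz[OF grp_Zn tc] rep[OF j] inA'[OF aA] by simp
      moreover have "z c \<noteq> 0" using c by (simp add: supp_def)
      ultimately have "comp j z ?a \<noteq> 0" by simp
      then show False using cz by (simp add: tzero_def)
    qed
    then show "\<exists>i. Suc j \<le> i \<and> i < mm \<and> vsub c (rep i) \<in> A'" using i by (intro exI[of _ i]) auto
  qed
  then show ?thesis using z by (simp add: Mset_def)
qed

lemma Mset_mm: "x \<in> Mset mm \<Longrightarrow> x = tzero"
  by (auto simp: Mset_def supp_def tzero_def fun_eq_iff)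

lemma Mset_0: "Mset 0 = TGA (Zn n)"
  using R1 by (auto simp: Mset_def TGA_def)

lemma GG_inj: assumes J: "rideal (Zn n) \<tau> J" and J': "rideal (Zn n) \<tau> J'" and sub: "J \<subseteq> J'"
  and eq: "GG J = GG J'" shows "J = J'"
proof -
  have sleq: "\<And>j. j < mm \<Longrightarrow> slice J j = slice J' j" using eq sl_GG by metis
  have J'add: "\<forall>x\<in>J'. \<forall>y\<in>J'. tadd x y \<in> J'" and J'neg: "\<forall>x\<in>J'. tneg x \<in> J'"
    and Jadd: "\<forall>x\<in>J. \<forall>y\<in>J. tadd x y \<in> J" and J0: "tzero \<in> J"
    using J J' by (auto simp: rideal_def)
  have main: "d \<le> mm \<Longrightarrow> J' \<inter> Mset (mm - d) \<subseteq> J" for d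
  proof (induction d)
    case 0
    then show ?case using Mset_mm J0 by auto
  next
    case (Suc d)
    define j where "j = mm - Suc d"
    have j: "j < mm" "Suc j = mm - d" using Suc.prems by (auto simp: j_def)
    show ?case unfolding j_def[symmetric]
    proof
      fix x assume x: "x \<in> J' \<inter> Mset j"
      then have "comp j x \<in> slice J' j" by (simp add: slice_def)
      then have "comp j x \<in> slice J j" using sleq j by simp
      then obtain y where y: "y \<in> J" "y \<in> Mset j" "comp j y = comp j x" by (auto simp: slice_def)
      define z where "z = tadd x (tneg y)"
      have zJ': "z \<in> J'" using x y sub J'add J'neg by (auto simp: z_def)
      have zM: "z \<in> Mset j" using x y by (simp add: z_def Mset_tadd Mset_tneg)
      have "comp j z = tadd (comp j x) (tneg (comp j y))" by (simp add: z_def comp_tadd comp_tneg)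
      then have "comp j z = tzero" using y(3) by (simp add: tadd_def tneg_def tzero_def)
      then have "z \<in> Mset (Suc j)" using Mset_Suc zM j by blast
      then have "z \<in> J" using Suc.IH Suc.prems zJ' j by auto
      moreover have "x = tadd z y" by (simp add: z_def tadd_def tneg_def fun_eq_iff)
      ultimately show "x \<in> J" using y Jadd by auto
    qed
  qed
  have "J' \<subseteq> J" using main[of mm] Mset_0 J' by (auto simp: rideal_def)
  then show ?thesis using sub by auto
qed

lemma slice_zero: "j < mm \<Longrightarrow> slice {tzero} j = {tzero}"
  using Mset_tzero by (auto simp: slice_def)

lemma slice_TGA: assumes j: "j < mm" shows "slice (TGA (Zn n)) j = TGA A'"
proof (intro equalityI subsetI)
  fix u assume "u \<in> slice (TGA (Zn n)) j"
  then show "u \<in> TGA A'" using comp_TGA by (auto simp: slice_def TGA_def)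
next
  fix s :: "zvec \<Rightarrow> 'k" assume s: "s \<in> TGA A'"
  define r where "r = rep j"
  have r: "r \<in> Zn n" using rep[OF j] by (simp add: r_def)
  define x where "x = (\<lambda>c. if vsub c r \<in> A' then s (vsub c r) * \<tau> r (vsub c r) else 0)"
  have sx: "supp x \<subseteq> (\<lambda>a. vadd r a) ` supp s"
  proof
    fix c assume "c \<in> supp x"
    then have "vsub c r \<in> supp s" by (auto simp: supp_def x_def split: if_splits)
    then show "c \<in> (\<lambda>a. vadd r a) ` supp s" by (intro image_eqI[of _ _ "vsub c r"]) auto
  qed
  have "(\<lambda>a. vadd r a) ` supp s \<subseteq> Zn n" using s r grp_Zn inA' by (auto simp: TGA_def grpD)
  then have xT: "x \<in> TGA (Zn n)" using sx s by (auto simp: TGA_def intro: finite_subset)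
  have "\<forall>c\<in>supp x. \<exists>i. j \<le> i \<and> i < mm \<and> vsub c (rep i) \<in> A'"
    using j by (auto simp: supp_def x_def r_def split: if_splits)
  then have xM: "x \<in> Mset j" using xT by (simp add: Mset_def)
  have "comp j x = s"
  proof
    fix a show "comp j x a = s a"
    proof (cases "a \<in> A'")
      case True
      have "\<tau> r a \<noteq> 0" using tnz[OF grp_Zn tc r inA'[OF True]] .
      then show ?thesis using True by (simp add: comp_def x_def r_def[symmetric])
    next
      case False
      then show ?thesis using s by (auto simp: comp_def TGA_def supp_def)
    qed
  qed
  then show "s \<in> slice (TGA (Zn n)) j" using xT xM by (auto simp: slice_def)
qed

lemma dirB: "devlt A' \<tau> k {tzero} (TGA A') \<Longrightarrow> devlt (Zn n) \<tau> k {tzero} (TGA (Zn n))"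
  unfolding devlt_gdev
proof -
  assume h: "gdev {I. rideal A' \<tau> I} k {tzero} (TGA A')"
  let ?Q = "{X. X \<subseteq> {..<mm} \<times> UNIV \<and> (\<forall>j<mm. sl X j \<in> {I. rideal A' \<tau> I})}"
  have GGsub: "GG J \<subseteq> {..<mm} \<times> UNIV" for J by (auto simp: GG_def)
  have hQ: "gdev ?Q k (GG {tzero}) (GG (TGA (Zn n)))"
    by (rule gdev_prod[OF GGsub GGsub]) (simp add: sl_GG slice_zero slice_TGA h)
  show "gdev {I. rideal (Zn n) \<tau> I} k {tzero} (TGA (Zn n))"
  proof (rule gdev_embed[where f = GG and Q = ?Q])
    show "\<forall>x\<in>{I. rideal (Zn n) \<tau> I}. GG x \<in> ?Q" using GGsub rideal_slice sl_GG by auto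
    show "\<forall>x\<in>{I. rideal (Zn n) \<tau> I}. \<forall>y\<in>{I. rideal (Zn n) \<tau> I}. x \<subseteq> y \<longrightarrow> GG x \<subseteq> GG y"
      by (auto simp: GG_def slice_def)
    show "\<forall>x\<in>{I. rideal (Zn n) \<tau> I}. \<forall>y\<in>{I. rideal (Zn n) \<tau> I}. x \<subseteq> y \<longrightarrow> GG x = GG y \<longrightarrow> x = y"
      using GG_inj by auto
    show "{tzero} \<in> {I. rideal (Zn n) \<tau> I}" using rideal_zero[OF grp_Zn tc] by simp
    show "TGA (Zn n) \<in> {I. rideal (Zn n) \<tau> I}" using rideal_TGA[OF grp_Zn tc] by simp
    show "{tzero} \<subseteq> TGA (Zn n)" using TGA_tzero by auto
  qed (rule hQ)
qed

end

theorem corollary5p2: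
  fixes \<tau> :: "zvec \<Rightarrow> zvec \<Rightarrow> 'k::field" and n :: nat and A' :: "zvec set"
  assumes "two_cocycle (Zn n) \<tau>"
    and "subgroup_of (Zn n) A'"
    and "finite_index (Zn n) A'"
  shows "Kdim A' \<tau> = Kdim (Zn n) \<tau>"
proof -
  have H: "\<And>k. devlt A' \<tau> k {tzero} (TGA A') = devlt (Zn n) \<tau> k {tzero} (TGA (Zn n))"
    using dirA[OF assms(1,2)] dirB[OF assms] by blast
  show ?thesis unfolding Kdim_def by (simp only: H)
qed


end
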